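(* Let $G$ be a finite simple connected graph of order $n\ge 3$. Then $W_3(G)\ge \frac{n-2}{2}W(G)$. Equality holds if and only if $G$ contains no three vertices $u,v,w$ such that $2\max\{d(u,v),d(u,w),d(v,w)\}<d(u,v)+d(u,w)+d(v,w)$ and every choice of three shortest paths between the three pairs $(u,v),(v,w),(w,u)$ consists of pairwise edge-disjoint paths.
   Context: $d(u,v)$ is the graph distance and $W(G)=\sum_{\{u,v\}\subseteq V}d(u,v)$ is the Wiener index. For a set $S$ of vertices, the Steiner distance $d_3(S)$ (for $|S|=3$) is the minimum number of edges of a connected subgraph (equivalently a subtree) of $G$ containing $S$, and $W_3(G)=\sum_{S\subseteq V,\,|S|=3}d_3(S)$. *)

theory Defs
  imports Complex_Main
begin

definition simple_graph :: "'a set \<Rightarrow> 'a set set \<Rightarrow> bool" where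
  "simple_graph V E \<longleftrightarrow> finite V \<and> (\<forall>e\<in>E. e \<subseteq> V \<and> card e = 2)"

definition walk :: "'a set set \<Rightarrow> 'a list \<Rightarrow> 'a \<Rightarrow> 'a \<Rightarrow> bool" where
  "walk F p u v \<longleftrightarrow> p \<noteq> [] \<and> hd p = u \<and> last p = v \<and>
     (\<forall>i. Suc i < length p \<longrightarrow> {p ! i, p ! Suc i} \<in> F)"

definition connected_graph :: "'a set \<Rightarrow> 'a set set \<Rightarrow> bool" where
  "connected_graph V E \<longleftrightarrow> V \<noteq> {} \<and> (\<forall>u\<in>V. \<forall>v\<in>V. \<exists>p. walk E p u v)"

definition dist :: "'a set set \<Rightarrow> 'a \<Rightarrow> 'a \<Rightarrow> nat" where
  "dist E u v = (LEAST k. \<exists>p. walk E p u v \<and> length p = Suc k)"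

definition shortest_path :: "'a set set \<Rightarrow> 'a list \<Rightarrow> 'a \<Rightarrow> 'a \<Rightarrow> bool" where
  "shortest_path E p u v \<longleftrightarrow> walk E p u v \<and> length p = Suc (dist E u v)"

definition path_edges :: "'a list \<Rightarrow> 'a set set" where
  "path_edges p = {{p ! i, p ! Suc i} | i. Suc i < length p}"

definition steiner_dist :: "'a set \<Rightarrow> 'a set set \<Rightarrow> 'a set \<Rightarrow> nat" where
  "steiner_dist V E S = Min {card F | U F. U \<subseteq> V \<and> F \<subseteq> E \<and> (\<forall>e\<in>F. e \<subseteq> U) \<and> S \<subseteq> U \<and>
       (\<forall>x\<in>U. \<forall>y\<in>U. \<exists>p. walk F p x y)}"

text \<open>Wiener index: sum of distances over unordered pairs (= half the ordered double sum).\<close>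
definition wiener :: "'a set \<Rightarrow> 'a set set \<Rightarrow> real" where
  "wiener V E = (\<Sum>u\<in>V. \<Sum>v\<in>V. real (dist E u v)) / 2"

definition wiener3 :: "'a set \<Rightarrow> 'a set set \<Rightarrow> real" where
  "wiener3 V E = (\<Sum>S\<in>{S. S \<subseteq> V \<and> card S = 3}. real (steiner_dist V E S))"

end

theory Submission
  imports Defs
begin


lemma walk_single[simp]: "walk F [x] a b \<longleftrightarrow> x = a \<and> x = b"
  unfolding walk_def by auto

lemma walk_Nil[simp]: "\<not> walk F [] a b"
  unfolding walk_def by auto

lemma walk_Cons2: "walk F (x # y # p) a b \<longleftrightarrow> x = a \<and> {x,y} \<in> F \<and> walk F (y # p) y b"
proof
  assume h: "walk F (x # y # p) a b"
  have e: "\<And>i. Suc i < length (x#y#p) \<Longrightarrow> {(x#y#p) ! i, (x#y#p) ! Suc i} \<in> F"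
    using h unfolding walk_def by blast
  have "{x,y} \<in> F" using e[of 0] by simp
  moreover have "\<And>i. Suc i < length (y#p) \<Longrightarrow> {(y#p) ! i, (y#p) ! Suc i} \<in> F"
    using e by (metis Suc_less_eq length_Cons nth_Cons_Suc)
  ultimately show "x = a \<and> {x,y} \<in> F \<and> walk F (y # p) y b"
    using h unfolding walk_def by auto
next
  assume h: "x = a \<and> {x,y} \<in> F \<and> walk F (y # p) y b"
  have e: "\<And>i. Suc i < length (y#p) \<Longrightarrow> {(y#p) ! i, (y#p) ! Suc i} \<in> F"
    using h unfolding walk_def by blast
  have "\<And>i. Suc i < length (x#y#p) \<Longrightarrow> {(x#y#p) ! i, (x#y#p) ! Suc i} \<in> F"
  proof -
    fix i assume "Suc i < length (x#y#p)"
    then show "{(x#y#p) ! i, (x#y#p) ! Suc i} \<in> F"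
      using e[of "i - 1"] h by (cases i) auto
  qed
  then show "walk F (x # y # p) a b" using h unfolding walk_def by auto
qed

lemma walk_append: "walk F p a b \<Longrightarrow> walk F q b c \<Longrightarrow> walk F (p @ tl q) a c"
proof (induction p arbitrary: a)
  case Nil then show ?case by simp
next
  case (Cons x p)
  show ?case
  proof (cases p)
    case Nil
    then have "x = a" "x = b" using Cons.prems by auto
    moreover have "q \<noteq> []" "hd q = b" using Cons.prems unfolding walk_def by auto
    ultimately show ?thesis using Cons.prems Nil by (cases q) auto
  next
    case (Cons y p')
    then have h: "x = a" "{x,y} \<in> F" "walk F (y # p') y b" using Cons.prems walk_Cons2 by metis+
    have "walk F ((y # p') @ tl q) y c" using Cons.IH h(3) Cons.prems(2) \<open>p = y # p'\<close> by simp
    then show ?thesis using h \<open>p = y # p'\<close> by (simp add: walk_Cons2)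
  qed
qed

lemma walk_rev: "walk F p a b \<Longrightarrow> walk F (rev p) b a"
proof (induction p arbitrary: a)
  case Nil then show ?case by simp
next
  case (Cons x p)
  show ?case
  proof (cases p)
    case Nil then show ?thesis using Cons.prems by auto
  next
    case (Cons y p')
    then have h: "x = a" "{x,y} \<in> F" "walk F (y # p') y b" using Cons.prems walk_Cons2 by metis+
    have r: "walk F (rev (y # p')) b y" using Cons.IH h(3) \<open>p = y # p'\<close> by simp
    have "walk F [y, x] y x" using h(2) by (simp add: walk_Cons2 insert_commute)
    from walk_append[OF r this] show ?thesis using h \<open>p = y # p'\<close> by simp
  qed
qed

lemma walk_take: "walk F p a b \<Longrightarrow> i < length p \<Longrightarrow> walk F (take (Suc i) p) a (p ! i)"
proof -
  assume w: "walk F p a b" and i: "i < length p"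
  have l: "last (take (Suc i) p) = p ! i"
    using i by (simp add: take_Suc_conv_app_nth)
  show ?thesis using w i l unfolding walk_def
    by (auto simp: hd_take nth_take min_def)
qed

lemma walk_drop: "walk F p a b \<Longrightarrow> i < length p \<Longrightarrow> walk F (drop i p) (p ! i) b"
  unfolding walk_def
  by (auto simp: hd_drop_conv_nth last_drop nth_drop)

lemma walk_mono: "F \<subseteq> F' \<Longrightarrow> walk F p a b \<Longrightarrow> walk F' p a b"
  unfolding walk_def by blast

lemma walk_edges: "walk F p a b \<Longrightarrow> walk (path_edges p) p a b"
  unfolding walk_def path_edges_def by blast

lemma path_edges_sub: "walk F p a b \<Longrightarrow> path_edges p \<subseteq> F"
  unfolding walk_def path_edges_def by blast

lemma walk_distinct: "walk F p a b \<Longrightarrow> \<exists>q. walk F q a b \<and> distinct q \<and> set q \<subseteq> set p"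
proof (induction "length p" arbitrary: p rule: less_induct)
  case less
  show ?case
  proof (cases "distinct p")
    case True then show ?thesis using less.prems by blast
  next
    case False
    then obtain i j where ij: "i < j" "j < length p" "p ! i = p ! j"
      by (metis distinct_conv_nth linorder_neqE_nat)
    have w1: "walk F (take (Suc i) p) a (p ! i)" using walk_take[OF less.prems, of i] ij by simp
    have w2: "walk F (drop j p) (p ! i) b" using walk_drop[OF less.prems] ij by simp
    define p' where "p' = take (Suc i) p @ tl (drop j p)"
    have w: "walk F p' a b" unfolding p'_def using walk_append[OF w1 w2] .
    have "length p' < length p" using ij unfolding p'_def by simp
    then obtain q where q: "walk F q a b" "distinct q" "set q \<subseteq> set p'"
      using less.hyps w by blast
    have "set p' \<subseteq> set p"
    proof -
      have "set (tl (drop j p)) \<subseteq> set (drop j p)" by (cases "drop j p") auto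
      then show ?thesis unfolding p'_def using set_drop_subset[of j p] set_take_subset[of "Suc i" p] by auto
    qed
    then show ?thesis using q by blast
  qed
qed

lemma path_edges_eq: "path_edges p = (\<lambda>i. {p ! i, p ! Suc i}) ` {..<length p - 1}"
  unfolding path_edges_def by auto

lemma card_path_edges_le: "card (path_edges p) \<le> length p - 1"
  unfolding path_edges_eq using card_image_le[of "{..<length p - 1}"] by simp

lemma card_path_edges_distinct: "distinct p \<Longrightarrow> card (path_edges p) = length p - 1"
proof -
  assume d: "distinct p"
  have "inj_on (\<lambda>i. {p ! i, p ! Suc i}) {..<length p - 1}"
  proof
    fix i j assume i: "i \<in> {..<length p - 1}" and j: "j \<in> {..<length p - 1}"
      and e: "{p ! i, p ! Suc i} = {p ! j, p ! Suc j}"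
    have inj: "\<And>x y. x < length p \<Longrightarrow> y < length p \<Longrightarrow> p ! x = p ! y \<Longrightarrow> x = y"
      using d nth_eq_iff_index_eq by blast
    have l: "i < length p" "Suc i < length p" "j < length p" "Suc j < length p" using i j by auto
    have "p ! i \<in> {p ! j, p ! Suc j}" using e by blast
    then have c1: "i = j \<or> i = Suc j" using inj l by blast
    have "p ! Suc i \<in> {p ! j, p ! Suc j}" using e by blast
    then have c2: "Suc i = j \<or> Suc i = Suc j" using inj l by blast
    from c1 c2 show "i = j" by auto
  qed
  then show ?thesis unfolding path_edges_eq by (simp add: card_image)
qed



lemma dist_le: "walk E p u v \<Longrightarrow> dist E u v \<le> length p - 1"
proof -
  assume w: "walk E p u v"
  then have "length p = Suc (length p - 1)" unfolding walk_def by (cases p) auto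
  then have "\<exists>q. walk E q u v \<and> length q = Suc (length p - 1)" using w by blast
  then show ?thesis unfolding Defs.dist_def by (rule Least_le)
qed

lemma dist_ex: "walk E p u v \<Longrightarrow> \<exists>q. walk E q u v \<and> length q = Suc (dist E u v)"
proof -
  assume w: "walk E p u v"
  then have "length p = Suc (length p - 1)" unfolding walk_def by (cases p) auto
  then have ex: "\<exists>k. \<exists>q. walk E q u v \<and> length q = Suc k" using w by blast
  define P where "P = (\<lambda>k. \<exists>q. walk E q u v \<and> length q = Suc k)"
  have "P (Least P)" using ex unfolding P_def[symmetric] by (rule LeastI_ex)
  moreover have "dist E u v = Least P" unfolding P_def Defs.dist_def by simp
  ultimately show ?thesis unfolding P_def by simp
qed

lemma ex_shortest: "walk E p u v \<Longrightarrow> \<exists>P. shortest_path E P u v"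
proof -
  assume "walk E p u v"
  from dist_ex[OF this] obtain q where "walk E q u v \<and> length q = Suc (dist E u v)" by blast
  then show ?thesis unfolding shortest_path_def by blast
qed

lemma dist_self[simp]: "dist E u u = 0"
  using dist_le[of E "[u]" u u] by simp

lemma dist_zero: "walk E p u v \<Longrightarrow> dist E u v = 0 \<Longrightarrow> u = v"
proof -
  assume "walk E p u v" "dist E u v = 0"
  then obtain q where q: "walk E q u v" "length q = 1" using dist_ex[OF \<open>walk E p u v\<close>] by auto
  then obtain z where "q = [z]" by (metis One_nat_def length_0_conv length_Suc_conv)
  then show ?thesis using q by auto
qed

lemma dist_sym_le: "walk E p u v \<Longrightarrow> dist E v u \<le> dist E u v"
proof -
  assume "walk E p u v"
  from dist_ex[OF this] obtain q where q: "walk E q u v" "length q = Suc (dist E u v)" by blast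
  have "walk E (rev q) v u" using walk_rev[OF q(1)] .
  from dist_le[OF this] show ?thesis using q by simp
qed

lemma dist_tri: "walk E p u v \<Longrightarrow> walk E p' v w \<Longrightarrow> dist E u w \<le> dist E u v + dist E v w"
proof -
  assume a1: "walk E p u v" and a2: "walk E p' v w"
  from dist_ex[OF a1] obtain q where q: "walk E q u v" "length q = Suc (dist E u v)" by blast
  from dist_ex[OF a2] obtain q' where q': "walk E q' v w" "length q' = Suc (dist E v w)" by blast
  have "walk E (q @ tl q') u w" using walk_append[OF q(1) q'(1)] .
  from dist_le[OF this] show ?thesis using q q' by simp
qed

lemma sp_nth:
  assumes P: "shortest_path E P s t" and i: "i < length P"
  shows "dist E s (P ! i) = i \<and> dist E (P ! i) t = length P - 1 - i"
proof -
  have w: "walk E P s t" and l: "length P = Suc (dist E s t)" using P unfolding shortest_path_def by auto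
  have w1: "walk E (take (Suc i) P) s (P ! i)" using walk_take[OF w i] .
  have w2: "walk E (drop i P) (P ! i) t" using walk_drop[OF w i] .
  have a: "dist E s (P ! i) \<le> i" using dist_le[OF w1] i by simp
  have b: "dist E (P ! i) t \<le> length P - 1 - i" using dist_le[OF w2] i by simp
  have c: "dist E s t \<le> dist E s (P ! i) + dist E (P ! i) t" using dist_tri[OF w1 w2] .
  show ?thesis using a b c l i by linarith
qed

lemma pe_sub_set: "e \<in> path_edges p \<Longrightarrow> e \<subseteq> set p"
  unfolding path_edges_def by auto

locale cg =
  fixes V :: "'a set" and E :: "'a set set"
  assumes sg: "simple_graph V E" and cn: "connected_graph V E"
begin

lemma finV: "finite V" using sg unfolding simple_graph_def by blast
lemma EV: "e \<in> E \<Longrightarrow> e \<subseteq> V" using sg unfolding simple_graph_def by blast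
lemma finE: "finite E"
proof -
  have "E \<subseteq> Pow V" using EV by blast
  then show ?thesis using finV finite_subset by (metis finite_Pow_iff)
qed

lemma walk_in_V: "walk E p a b \<Longrightarrow> a \<in> V \<Longrightarrow> set p \<subseteq> V"
proof
  fix x assume w: "walk E p a b" and a: "a \<in> V" and x: "x \<in> set p"
  then obtain i where i: "i < length p" "p ! i = x" by (metis in_set_conv_nth)
  show "x \<in> V"
  proof (cases "Suc i < length p")
    case True then have "{p!i, p!Suc i} \<in> E" using w unfolding walk_def by blast
    then show ?thesis using EV i by blast
  next
    case False
    show ?thesis
    proof (cases i)
      case 0
      have "p ! 0 = hd p" using i 0 by (simp add: hd_conv_nth)
      then show ?thesis using w i a 0 unfolding walk_def by simp
    next
      case (Suc k) then have "{p!k, p!Suc k} \<in> E" using w i unfolding walk_def by auto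
      then show ?thesis using EV i Suc by blast
    qed
  qed
qed

lemma ex_walk: "u \<in> V \<Longrightarrow> v \<in> V \<Longrightarrow> \<exists>p. walk E p u v"
  using cn unfolding connected_graph_def by blast

lemma ex_sp: "u \<in> V \<Longrightarrow> v \<in> V \<Longrightarrow> \<exists>P. shortest_path E P u v"
proof -
  assume "u \<in> V" "v \<in> V"
  then obtain p where "walk E p u v" using ex_walk by blast
  from ex_shortest[OF this] show ?thesis .
qed

lemma dsym: "u \<in> V \<Longrightarrow> v \<in> V \<Longrightarrow> dist E u v = dist E v u"
proof -
  assume "u \<in> V" "v \<in> V"
  then obtain p q where "walk E p u v" "walk E q v u" using ex_walk by blast
  then show ?thesis using dist_sym_le[of E p u v] dist_sym_le[of E q v u] by simp
qed

lemma dtri: "u \<in> V \<Longrightarrow> v \<in> V \<Longrightarrow> w \<in> V \<Longrightarrow> dist E u w \<le> dist E u v + dist E v w"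
proof -
  assume "u \<in> V" "v \<in> V" "w \<in> V"
  then obtain p q where "walk E p u v" "walk E q v w" using ex_walk by blast
  then show ?thesis by (rule dist_tri)
qed

lemma dzero: "u \<in> V \<Longrightarrow> v \<in> V \<Longrightarrow> dist E u v = 0 \<Longrightarrow> u = v"
proof -
  assume "u \<in> V" "v \<in> V" "dist E u v = 0"
  then obtain p where "walk E p u v" using ex_walk by blast
  from dist_zero[OF this \<open>dist E u v = 0\<close>] show ?thesis .
qed

definition feas :: "'a set \<Rightarrow> 'a set set \<Rightarrow> 'a set \<Rightarrow> bool" where
  "feas U F S \<longleftrightarrow> U \<subseteq> V \<and> F \<subseteq> E \<and> (\<forall>e\<in>F. e \<subseteq> U) \<and> S \<subseteq> U \<and>
       (\<forall>x\<in>U. \<forall>y\<in>U. \<exists>p. walk F p x y)"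

lemma st_eq: "steiner_dist V E S = Min {card F | U F. feas U F S}"
  unfolding steiner_dist_def feas_def by simp

lemma st_fin: "finite {card F | U F. feas U F S}"
proof -
  have "{card F | U F. feas U F S} \<subseteq> {..card E}"
    using card_mono[OF finE] unfolding feas_def by auto
  then show ?thesis using finite_subset by blast
qed

lemma st_ne: "S \<subseteq> V \<Longrightarrow> {card F | U F. feas U F S} \<noteq> {}"
proof -
  assume "S \<subseteq> V"
  then have "feas V E S" unfolding feas_def using EV ex_walk by blast
  then show ?thesis by blast
qed

lemma st_lower_aux:
  assumes f: "feas U F S" and uvw: "u \<in> U" "v \<in> U" "w \<in> U"
  shows "\<exists>x\<in>V. dist E u x + dist E v x + dist E w x \<le> card F"
proof -
  have UV: "U \<subseteq> V" and FE: "F \<subseteq> E" and conn: "\<forall>x\<in>U. \<forall>y\<in>U. \<exists>p. walk F p x y"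
    using f unfolding feas_def by blast+
  obtain p0 where "walk F p0 u v" using conn uvw by blast
  from walk_distinct[OF this] obtain P where P: "walk F P u v" "distinct P" by blast
  obtain q0 where "walk F q0 w v" using conn uvw by blast
  from walk_distinct[OF this] obtain q where q: "walk F q w v" "distinct q" by blast
  have PE: "walk E P u v" using walk_mono[OF FE P(1)] .
  have "v \<in> set P" using P(1) unfolding walk_def by auto
  moreover have "q ! (length q - 1) = v" "length q - 1 < length q"
    using q(1) unfolding walk_def by (auto simp: last_conv_nth)
  ultimately have ex: "\<exists>j. j < length q \<and> q ! j \<in> set P" by metis
  define j where "j = (LEAST j. j < length q \<and> q ! j \<in> set P)"
  have j: "j < length q" "q ! j \<in> set P" using LeastI_ex[OF ex] unfolding j_def by auto
  have jmin: "\<And>k. k < j \<Longrightarrow> q ! k \<notin> set P"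
    using not_less_Least j(1) unfolding j_def by (metis order.strict_trans)
  define x where "x = q ! j"
  obtain i where i: "i < length P" "P ! i = x" using j(2) unfolding x_def by (metis in_set_conv_nth)
  define Q where "Q = take (Suc j) q"
  have Q: "walk F Q w x" unfolding Q_def x_def using walk_take[OF q(1) j(1)] .
  have QE: "walk E Q w x" using walk_mono[OF FE Q] .
  have Qd: "distinct Q" unfolding Q_def using q(2) by simp
  have Ql: "length Q = Suc j" unfolding Q_def using j(1) by simp
  have d1: "dist E u x \<le> i" using dist_le[OF walk_take[OF PE i(1)]] i by simp
  have d2: "dist E x v \<le> length P - 1 - i" using dist_le[OF walk_drop[OF PE i(1)]] i by simp
  have d3: "dist E w x \<le> j" using dist_le[OF QE] Ql by simp
  have uV: "u \<in> V" using uvw UV by blast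
  have vV: "v \<in> V" using uvw UV by blast
  have xV: "x \<in> V" using walk_in_V[OF PE uV] i nth_mem by blast
  have dvx: "dist E v x = dist E x v" using dsym xV vV by metis
  have disj: "path_edges P \<inter> path_edges Q = {}"
  proof (rule ccontr)
    assume "path_edges P \<inter> path_edges Q \<noteq> {}"
    then obtain e where e: "e \<in> path_edges P" "e \<in> path_edges Q" by blast
    then obtain k where k: "Suc k < length Q" "e = {Q ! k, Q ! Suc k}" unfolding path_edges_def by blast
    have "Q ! k = q ! k" "k < j" using k Ql unfolding Q_def by auto
    then have "Q ! k \<notin> set P" using jmin by simp
    moreover have "Q ! k \<in> set P" using pe_sub_set[OF e(1)] k by blast
    ultimately show False by blast
  qed
  have finF: "finite F" using finE FE finite_subset by blast
  have "card (path_edges P \<union> path_edges Q) \<le> card F"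
    using path_edges_sub[OF P(1)] path_edges_sub[OF Q] finF by (intro card_mono) auto
  moreover have "card (path_edges P \<union> path_edges Q) = card (path_edges P) + card (path_edges Q)"
    using disj finF path_edges_sub[OF P(1)] path_edges_sub[OF Q]
    by (intro card_Un_disjoint) (auto intro: finite_subset)
  moreover have "card (path_edges P) = length P - 1" using card_path_edges_distinct[OF P(2)] .
  moreover have "card (path_edges Q) = j" using card_path_edges_distinct[OF Qd] Ql by simp
  ultimately show ?thesis using d1 d2 d3 dvx xV i(1) by (intro bexI[of _ x]) linarith+
qed

lemma reach_prefix:
  assumes "walk F A x z" "y \<in> set A"
  shows "\<exists>p. walk (path_edges A) p x y"
proof -
  obtain k where "k < length A" "A ! k = y" using assms(2) by (metis in_set_conv_nth)
  then show ?thesis using walk_take[OF walk_edges[OF assms(1)]] by metis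
qed

lemma st_upper:
  assumes V: "x \<in> V" "u \<in> V" "v \<in> V" "w \<in> V"
  shows "steiner_dist V E {u,v,w} \<le> dist E x u + dist E x v + dist E x w"
proof -
  obtain Au where Au: "shortest_path E Au x u" using ex_sp V by blast
  obtain Av where Av: "shortest_path E Av x v" using ex_sp V by blast
  obtain Aw where Aw: "shortest_path E Aw x w" using ex_sp V by blast
  have wu: "walk E Au x u" "length Au = Suc (dist E x u)" using Au unfolding shortest_path_def by auto
  have wv: "walk E Av x v" "length Av = Suc (dist E x v)" using Av unfolding shortest_path_def by auto
  have ww: "walk E Aw x w" "length Aw = Suc (dist E x w)" using Aw unfolding shortest_path_def by auto
  define F where "F = path_edges Au \<union> path_edges Av \<union> path_edges Aw"
  define U where "U = set Au \<union> set Av \<union> set Aw"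
  have r: "\<forall>y\<in>U. \<exists>p. walk F p x y"
  proof
    fix y assume "y \<in> U"
    then show "\<exists>p. walk F p x y" unfolding U_def
      using reach_prefix[OF wu(1)] reach_prefix[OF wv(1)] reach_prefix[OF ww(1)]
        walk_mono[of _ F] unfolding F_def by (metis Un_iff sup_ge1 sup_ge2 subset_trans)
  qed
  have conn: "\<forall>y\<in>U. \<forall>z\<in>U. \<exists>p. walk F p y z"
  proof (intro ballI)
    fix y z assume "y \<in> U" "z \<in> U"
    then obtain p1 p2 where "walk F p1 x y" "walk F p2 x z" using r by blast
    then have "walk F (rev p1 @ tl p2) y z" by (rule walk_append[OF walk_rev])
    then show "\<exists>p. walk F p y z" by (rule exI)
  qed
  have "U \<subseteq> V" unfolding U_def using walk_in_V[OF wu(1) V(1)] walk_in_V[OF wv(1) V(1)] walk_in_V[OF ww(1) V(1)] by auto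
  moreover have "F \<subseteq> E" unfolding F_def using path_edges_sub[OF wu(1)] path_edges_sub[OF wv(1)] path_edges_sub[OF ww(1)] by auto
  moreover have "\<forall>e\<in>F. e \<subseteq> U" unfolding F_def U_def using pe_sub_set[of _ Au] pe_sub_set[of _ Av] pe_sub_set[of _ Aw] by auto
  moreover have "{u,v,w} \<subseteq> U" unfolding U_def using wu(1) wv(1) ww(1) unfolding walk_def by auto
  ultimately have fe: "feas U F {u,v,w}" unfolding feas_def using conn by blast
  have "steiner_dist V E {u,v,w} \<le> card F"
    unfolding st_eq using fe st_fin by (intro Min_le) auto
  also have "card F \<le> card (path_edges Au) + card (path_edges Av) + card (path_edges Aw)"
    unfolding F_def by (meson card_Un_le add_right_mono order_trans)
  also have "\<dots> \<le> dist E x u + dist E x v + dist E x w"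
    using card_path_edges_le[of Au] card_path_edges_le[of Av] card_path_edges_le[of Aw] wu wv ww by simp
  finally show ?thesis .
qed

definition hasmed :: "'a \<Rightarrow> 'a \<Rightarrow> 'a \<Rightarrow> bool" where
  "hasmed u v w \<longleftrightarrow> (\<exists>x\<in>V. dist E u x + dist E x v = dist E u v \<and>
      dist E v x + dist E x w = dist E v w \<and> dist E u x + dist E x w = dist E u w)"

lemma triple:
  assumes V: "u \<in> V" "v \<in> V" "w \<in> V"
  shows "dist E u v + dist E v w + dist E u w \<le> 2 * steiner_dist V E {u,v,w} \<and>
    (2 * steiner_dist V E {u,v,w} = dist E u v + dist E v w + dist E u w \<longleftrightarrow> hasmed u v w)"
proof -
  have "steiner_dist V E {u,v,w} \<in> {card F | U F. feas U F {u,v,w}}"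
    unfolding st_eq using st_fin st_ne V by (intro Min_in) auto
  then obtain U F where f: "feas U F {u,v,w}" "card F = steiner_dist V E {u,v,w}" by auto
  have "u \<in> U" "v \<in> U" "w \<in> U" using f(1) unfolding feas_def by auto
  then obtain x where x: "x \<in> V" "dist E u x + dist E v x + dist E w x \<le> steiner_dist V E {u,v,w}"
    using st_lower_aux[OF f(1)] f(2) by metis
  have t1: "dist E u v \<le> dist E u x + dist E x v" using dtri V x(1) by blast
  have t2: "dist E v w \<le> dist E v x + dist E x w" using dtri V x(1) by blast
  have t3: "dist E u w \<le> dist E u x + dist E x w" using dtri V x(1) by blast
  have s1: "dist E x v = dist E v x" "dist E x w = dist E w x" "dist E x u = dist E u x"
    using dsym V x(1) by metis+
  have low: "dist E u v + dist E v w + dist E u w \<le> 2 * steiner_dist V E {u,v,w}"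
    using t1 t2 t3 s1 x(2) by linarith
  have "2 * steiner_dist V E {u,v,w} = dist E u v + dist E v w + dist E u w \<longleftrightarrow> hasmed u v w"
  proof
    assume "2 * steiner_dist V E {u,v,w} = dist E u v + dist E v w + dist E u w"
    then have "dist E u x + dist E x v = dist E u v \<and>
      dist E v x + dist E x w = dist E v w \<and> dist E u x + dist E x w = dist E u w"
      using t1 t2 t3 s1 x(2) by linarith
    then show "hasmed u v w" unfolding hasmed_def using x(1) by blast
  next
    assume "hasmed u v w"
    then obtain y where y: "y \<in> V" "dist E u y + dist E y v = dist E u v"
      "dist E v y + dist E y w = dist E v w" "dist E u y + dist E y w = dist E u w"
      unfolding hasmed_def by blast
    have "steiner_dist V E {u,v,w} \<le> dist E y u + dist E y v + dist E y w"
      using st_upper y(1) V by blast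
    moreover have "dist E y u = dist E u y" "dist E y v = dist E v y" using dsym V y(1) by metis+
    ultimately show "2 * steiner_dist V E {u,v,w} = dist E u v + dist E v w + dist E u w"
      using low y by linarith
  qed
  with low show ?thesis by blast
qed

end


lemma sum_restrict: "finite A \<Longrightarrow> S \<subseteq> A \<Longrightarrow> sum g S = (\<Sum>x\<in>A. if x \<in> S then g x else 0)"
  by (simp add: sum.inter_restrict[symmetric] Int_absorb1)

context cg
begin

definition T3 where "T3 = {S. S \<subseteq> V \<and> card S = 3}"

lemma finT3: "finite T3"
proof -
  have "T3 \<subseteq> Pow V" unfolding T3_def by auto
  then show ?thesis using finV finite_subset by (metis finite_Pow_iff)
qed

lemma card_pairs:
  assumes ab: "a \<in> V" "b \<in> V" "a \<noteq> b"
  shows "card {S \<in> T3. a \<in> S \<and> b \<in> S} = card V - 2"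
proof -
  have eq: "{S \<in> T3. a \<in> S \<and> b \<in> S} = (\<lambda>t. {a,b,t}) ` (V - {a,b})"
  proof (intro equalityI subsetI)
    fix S assume "S \<in> {S \<in> T3. a \<in> S \<and> b \<in> S}"
    then have S: "S \<subseteq> V" "card S = 3" "a \<in> S" "b \<in> S" unfolding T3_def by auto
    have fS: "finite S" using S(1) finV finite_subset by auto
    have "card (S - {a,b}) = card S - card {a,b}" using S fS by (intro card_Diff_subset) auto
    then have "card (S - {a,b}) = 1" using S ab by simp
    then obtain t where t: "S - {a,b} = {t}" by (meson card_1_singletonE)
    then have "S = {a,b,t}" "t \<in> V - {a,b}" using S by auto
    then show "S \<in> (\<lambda>t. {a,b,t}) ` (V - {a,b})" by auto
  next
    fix S assume "S \<in> (\<lambda>t. {a,b,t}) ` (V - {a,b})"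
    then obtain t where t: "t \<in> V - {a,b}" "S = {a,b,t}" by auto
    then show "S \<in> {S \<in> T3. a \<in> S \<and> b \<in> S}" unfolding T3_def using ab by auto
  qed
  have inj: "inj_on (\<lambda>t. {a,b,t}) (V - {a,b})"
  proof (rule inj_onI)
    fix t t' assume t: "t \<in> V - {a,b}" "t' \<in> V - {a,b}" "{a,b,t} = {a,b,t'}"
    then have "t \<in> {a,b,t'}" by auto
    then show "t = t'" using t(1) by auto
  qed
  have "card (V - {a,b}) = card V - card {a,b}" using ab finV by (intro card_Diff_subset) auto
  then show ?thesis using eq card_image[OF inj] ab by simp
qed

lemma sum_identity:
  "(\<Sum>S\<in>T3. \<Sum>a\<in>S. \<Sum>b\<in>S. real (dist E a b)) =
     (real (card V) - 2) * (\<Sum>a\<in>V. \<Sum>b\<in>V. real (dist E a b))"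
proof -
  define f where "f = (\<lambda>a b. real (dist E a b))"
  have s1: "(\<Sum>a\<in>S. \<Sum>b\<in>S. f a b) = (\<Sum>a\<in>V. \<Sum>b\<in>V. if a \<in> S \<and> b \<in> S then f a b else 0)"
    if "S \<in> T3" for S
  proof -
    have SV: "S \<subseteq> V" using that unfolding T3_def by auto
    have "(\<Sum>a\<in>S. \<Sum>b\<in>S. f a b) = (\<Sum>a\<in>V. if a \<in> S then (\<Sum>b\<in>S. f a b) else 0)"
      using sum_restrict[OF finV SV] by blast
    also have "\<dots> = (\<Sum>a\<in>V. if a \<in> S then (\<Sum>b\<in>V. if b \<in> S then f a b else 0) else 0)"
      using sum_restrict[OF finV SV, of "f _"] by (intro sum.cong[OF refl]) auto
    also have "\<dots> = (\<Sum>a\<in>V. \<Sum>b\<in>V. if a \<in> S \<and> b \<in> S then f a b else 0)"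
      by (rule sum.cong[OF refl]) auto
    finally show ?thesis .
  qed
  have "(\<Sum>S\<in>T3. \<Sum>a\<in>S. \<Sum>b\<in>S. f a b) = (\<Sum>S\<in>T3. \<Sum>a\<in>V. \<Sum>b\<in>V. if a \<in> S \<and> b \<in> S then f a b else 0)"
    using s1 by (rule sum.cong[OF refl])
  also have "\<dots> = (\<Sum>a\<in>V. \<Sum>S\<in>T3. \<Sum>b\<in>V. if a \<in> S \<and> b \<in> S then f a b else 0)"
    by (rule sum.swap)
  also have "\<dots> = (\<Sum>a\<in>V. \<Sum>b\<in>V. \<Sum>S\<in>T3. if a \<in> S \<and> b \<in> S then f a b else 0)"
    by (rule sum.cong[OF refl]) (rule sum.swap)
  also have "\<dots> = (\<Sum>a\<in>V. \<Sum>b\<in>V. f a b * real (card {S \<in> T3. a \<in> S \<and> b \<in> S}))"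
  proof (intro sum.cong[OF refl])
    fix a b
    show "(\<Sum>S\<in>T3. if a \<in> S \<and> b \<in> S then f a b else 0) = f a b * real (card {S \<in> T3. a \<in> S \<and> b \<in> S})"
      using sum.inter_filter[OF finT3, of "\<lambda>_. f a b" "\<lambda>S. a \<in> S \<and> b \<in> S"] by (simp add: mult.commute)
  qed
  also have "\<dots> = (\<Sum>a\<in>V. \<Sum>b\<in>V. (real (card V) - 2) * f a b)"
  proof (intro sum.cong[OF refl])
    fix a b assume ab: "a \<in> V" "b \<in> V"
    show "f a b * real (card {S \<in> T3. a \<in> S \<and> b \<in> S}) = (real (card V) - 2) * f a b"
    proof (cases "a = b")
      case True then show ?thesis unfolding f_def by simp
    next
      case False
      have "card {a,b} \<le> card V" using ab finV by (intro card_mono) auto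
      then have "card V \<ge> 2" using False by simp
      then show ?thesis using card_pairs[OF ab False] by (simp add: of_nat_diff)
    qed
  qed
  also have "\<dots> = (real (card V) - 2) * (\<Sum>a\<in>V. \<Sum>b\<in>V. f a b)"
    by (simp add: sum_distrib_left)
  finally show ?thesis unfolding f_def .
qed

lemma Ds_triple:
  assumes "u \<in> V" "v \<in> V" "w \<in> V" "u \<noteq> v" "v \<noteq> w" "u \<noteq> w"
  shows "(\<Sum>a\<in>{u,v,w}. \<Sum>b\<in>{u,v,w}. real (dist E a b)) =
     2 * real (dist E u v + dist E v w + dist E u w)"
proof -
  have "dist E v u = dist E u v" "dist E w u = dist E u w" "dist E w v = dist E v w"
    using dsym assms by metis+
  then show ?thesis using assms by simp
qed

end


lemma pe_rev_sub: "path_edges p \<subseteq> path_edges (rev p)"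
proof
  fix e assume "e \<in> path_edges p"
  then obtain i where i: "Suc i < length p" "e = {p ! i, p ! Suc i}" unfolding path_edges_def by blast
  define j where "j = length p - 2 - i"
  have j: "Suc j < length (rev p)" using i unfolding j_def by simp
  have "rev p ! j = p ! Suc i" using i unfolding j_def by (simp add: rev_nth)
  moreover have "rev p ! Suc j = p ! i" using i unfolding j_def by (simp add: rev_nth Suc_diff_Suc)
  ultimately have "e = {rev p ! j, rev p ! Suc j}" using i by (simp add: insert_commute)
  then show "e \<in> path_edges (rev p)" using j unfolding path_edges_def by blast
qed

lemma pe_rev: "path_edges (rev p) = path_edges p"
  using pe_rev_sub[of p] pe_rev_sub[of "rev p"] by simp

lemma pe_app_left: "path_edges p \<subseteq> path_edges (p @ q)"
proof
  fix e assume "e \<in> path_edges p"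
  then obtain i where i: "Suc i < length p" "e = {p ! i, p ! Suc i}" unfolding path_edges_def by blast
  then have "e = {(p @ q) ! i, (p @ q) ! Suc i}" "Suc i < length (p @ q)" by (auto simp: nth_append)
  then show "e \<in> path_edges (p @ q)" unfolding path_edges_def by blast
qed

lemma pe_app_right: "path_edges q \<subseteq> path_edges (p @ q)"
proof
  fix e assume "e \<in> path_edges q"
  then obtain i where i: "Suc i < length q" "e = {q ! i, q ! Suc i}" unfolding path_edges_def by blast
  have "(p @ q) ! (length p + i) = q ! i" "(p @ q) ! Suc (length p + i) = q ! Suc i"
    using nth_append_length_plus[of p q i] nth_append_length_plus[of p q "Suc i"] by auto
  then have "e = {(p @ q) ! (length p + i), (p @ q) ! Suc (length p + i)}"
    "Suc (length p + i) < length (p @ q)" using i by auto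
  then show "e \<in> path_edges (p @ q)" unfolding path_edges_def by blast
qed

lemma app_tl: "p \<noteq> [] \<Longrightarrow> q \<noteq> [] \<Longrightarrow> last p = hd q \<Longrightarrow> p @ tl q = butlast p @ q"
  by (metis append_butlast_last_id append_Cons append_assoc append_Nil list.collapse)

context cg
begin

lemma sp_rev: "shortest_path E P a b \<Longrightarrow> a \<in> V \<Longrightarrow> b \<in> V \<Longrightarrow> shortest_path E (rev P) b a"
  unfolding shortest_path_def using walk_rev dsym by (metis length_rev)

lemma shared_edge:
  assumes P: "shortest_path E P s t" and Q: "shortest_path E Q s t'" and sV: "s \<in> V"
    and e: "e \<in> path_edges P" "e \<in> path_edges Q"
  shows "\<exists>a\<in>V. a \<noteq> s \<and> dist E s a + dist E a t = dist E s t \<and> dist E s a + dist E a t' = dist E s t'"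
proof -
  obtain i where i: "Suc i < length P" "e = {P ! i, P ! Suc i}" using e(1) unfolding path_edges_def by blast
  obtain j where j: "Suc j < length Q" "e = {Q ! j, Q ! Suc j}" using e(2) unfolding path_edges_def by blast
  have Pi: "dist E s (P ! i) = i" "dist E s (P ! Suc i) = Suc i"
    "dist E (P ! Suc i) t = length P - 1 - Suc i"
    using sp_nth[OF P] i by auto
  have Qj: "dist E s (Q ! j) = j" "dist E s (Q ! Suc j) = Suc j"
    "dist E (Q ! Suc j) t' = length Q - 1 - Suc j"
    using sp_nth[OF Q] j by auto
  have "P ! i \<in> {Q ! j, Q ! Suc j}" using i j by blast
  then have c1: "i = j \<or> i = Suc j" using Pi Qj by auto
  have "P ! Suc i \<in> {Q ! j, Q ! Suc j}" using i j by blast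
  then have c2: "P ! Suc i = Q ! j \<and> Suc i = j \<or> P ! Suc i = Q ! Suc j \<and> Suc i = Suc j"
    using Pi Qj by auto
  with c1 have ij: "i = j" "P ! Suc i = Q ! Suc j" by auto
  define a where "a = P ! Suc i"
  have lP: "length P = Suc (dist E s t)" and lQ: "length Q = Suc (dist E s t')"
    using P Q unfolding shortest_path_def by auto
  have wP: "walk E P s t" using P unfolding shortest_path_def by auto
  have aV: "a \<in> V" using walk_in_V[OF wP sV] i unfolding a_def by auto
  have "a \<noteq> s" using Pi(2) unfolding a_def by auto
  moreover have "dist E s a + dist E a t = dist E s t" using Pi lP i unfolding a_def by auto
  moreover have "dist E s a + dist E a t' = dist E s t'" using Qj lQ j ij unfolding a_def by auto
  ultimately show ?thesis using aV by blast
qed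

lemma shrink:
  assumes V: "s \<in> V" "t \<in> V" "t' \<in> V" "a \<in> V"
    and h: "dist E s a + dist E a t = dist E s t" "dist E s a + dist E a t' = dist E s t'"
    and m: "hasmed a t t'"
  shows "hasmed s t t'"
proof -
  obtain x where x: "x \<in> V" "dist E a x + dist E x t = dist E a t"
    "dist E t x + dist E x t' = dist E t t'" "dist E a x + dist E x t' = dist E a t'"
    using m unfolding hasmed_def by blast
  have t1: "dist E s x \<le> dist E s a + dist E a x" using dtri V x(1) by blast
  have t2: "dist E s t \<le> dist E s x + dist E x t" using dtri V x(1) by blast
  have t3: "dist E s t' \<le> dist E s x + dist E x t'" using dtri V x(1) by blast
  have "dist E s x + dist E x t = dist E s t" using t1 t2 x h by linarith
  moreover have "dist E s x + dist E x t' = dist E s t'" using t1 t3 x h by linarith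
  ultimately show ?thesis unfolding hasmed_def using x by blast
qed

lemma swap12: "u \<in> V \<Longrightarrow> v \<in> V \<Longrightarrow> w \<in> V \<Longrightarrow> hasmed u v w \<Longrightarrow> hasmed v u w"
  unfolding hasmed_def by (metis dsym add.commute)

lemma swap23: "u \<in> V \<Longrightarrow> v \<in> V \<Longrightarrow> w \<in> V \<Longrightarrow> hasmed u v w \<Longrightarrow> hasmed u w v"
  unfolding hasmed_def by (metis dsym add.commute)

definition bad :: "'a \<Rightarrow> 'a \<Rightarrow> 'a \<Rightarrow> bool" where
  "bad u v w \<longleftrightarrow> u \<noteq> v \<and> v \<noteq> w \<and> u \<noteq> w \<and>
          2 * max (dist E u v) (max (dist E u w) (dist E v w))
            < dist E u v + dist E u w + dist E v w \<and>
          (\<forall>P Q R. shortest_path E P u v \<longrightarrow> shortest_path E Q v w \<longrightarrow> shortest_path E R w u \<longrightarrow>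
             path_edges P \<inter> path_edges Q = {} \<and> path_edges Q \<inter> path_edges R = {} \<and>
             path_edges P \<inter> path_edges R = {})"

end


context cg
begin

lemma nomed_bad:
  "u \<in> V \<Longrightarrow> v \<in> V \<Longrightarrow> w \<in> V \<Longrightarrow> \<not> hasmed u v w \<Longrightarrow> \<exists>x\<in>V. \<exists>y\<in>V. \<exists>z\<in>V. bad x y z"
proof (induction "dist E u v + dist E v w + dist E u w" arbitrary: u v w rule: less_induct)
  case less
  note V = less.prems(1-3)
  note nm = less.prems(4)
  have s: "dist E v u = dist E u v" "dist E w u = dist E u w" "dist E w v = dist E v w"
    using dsym V by metis+
  have tr: "dist E u v \<le> dist E u w + dist E w v" "dist E u w \<le> dist E u v + dist E v w"
    "dist E v w \<le> dist E v u + dist E u w"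
    using dtri V by blast+
  have d: "u \<noteq> v" "v \<noteq> w" "u \<noteq> w"
  proof -
    show "u \<noteq> v"
    proof
      assume "u = v"
      then have "hasmed u v w" unfolding hasmed_def using V by (intro bexI[of _ u]) auto
      then show False using nm by blast
    qed
    show "v \<noteq> w"
    proof
      assume "v = w"
      then have "hasmed u v w" unfolding hasmed_def using V by (intro bexI[of _ v]) auto
      then show False using nm by blast
    qed
    show "u \<noteq> w"
    proof
      assume "u = w"
      then have "hasmed u v w" unfolding hasmed_def using V s by (intro bexI[of _ u]) auto
      then show False using nm by blast
    qed
  qed
  have mx: "2 * max (dist E u v) (max (dist E u w) (dist E v w)) < dist E u v + dist E u w + dist E v w"
  proof (rule ccontr)
    assume "\<not> ?thesis"
    then have "dist E u w + dist E v w \<le> dist E u v \<or> dist E u v + dist E v w \<le> dist E u w \<or>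
      dist E u v + dist E u w \<le> dist E v w" by (auto simp: max_def split: if_splits)
    then have "hasmed u v w"
    proof (elim disjE)
      assume "dist E u w + dist E v w \<le> dist E u v"
      then show ?thesis unfolding hasmed_def using V s tr by (intro bexI[of _ w]) auto
    next
      assume "dist E u v + dist E v w \<le> dist E u w"
      then show ?thesis unfolding hasmed_def using V s tr by (intro bexI[of _ v]) auto
    next
      assume "dist E u v + dist E u w \<le> dist E v w"
      then show ?thesis unfolding hasmed_def using V s tr by (intro bexI[of _ u]) auto
    qed
    then show False using nm by blast
  qed
  show ?case
  proof (cases "bad u v w")
    case True then show ?thesis using V by blast
  next
    case False
    then obtain P Q R where PQR: "shortest_path E P u v" "shortest_path E Q v w" "shortest_path E R w u"
      and ne: "path_edges P \<inter> path_edges Q \<noteq> {} \<or> path_edges Q \<inter> path_edges R \<noteq> {} \<or>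
             path_edges P \<inter> path_edges R \<noteq> {}"
      using d mx unfolding bad_def by blast
    from ne show ?thesis
    proof (elim disjE)
      assume "path_edges P \<inter> path_edges Q \<noteq> {}"
      then obtain e where e: "e \<in> path_edges (rev P)" "e \<in> path_edges Q" by (auto simp: pe_rev)
      obtain a where a: "a \<in> V" "a \<noteq> v" "dist E v a + dist E a u = dist E v u"
        "dist E v a + dist E a w = dist E v w"
        using shared_edge[OF sp_rev[OF PQR(1) V(1,2)] PQR(2) V(2) e] by blast
      have "dist E v a \<noteq> 0" using dzero a V by metis
      have sa: "dist E u a = dist E a u" "dist E w a = dist E a w" using dsym a V by metis+
      have nm2: "\<not> hasmed a u w"
      proof
        assume "hasmed a u w"
        from shrink[OF V(2) V(1) V(3) a(1) a(3) a(4) this] have "hasmed v u w" .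
        from swap12[OF V(2) V(1) V(3) this] show False using nm by blast
      qed
      have "dist E a u + dist E u w + dist E a w < dist E u v + dist E v w + dist E u w"
        using a s \<open>dist E v a \<noteq> 0\<close> by linarith
      then show ?thesis using less.hyps[OF _ a(1) V(1) V(3) nm2] by blast
    next
      assume "path_edges Q \<inter> path_edges R \<noteq> {}"
      then obtain e where e: "e \<in> path_edges (rev Q)" "e \<in> path_edges R" by (auto simp: pe_rev)
      obtain a where a: "a \<in> V" "a \<noteq> w" "dist E w a + dist E a v = dist E w v"
        "dist E w a + dist E a u = dist E w u"
        using shared_edge[OF sp_rev[OF PQR(2) V(2,3)] PQR(3) V(3) e] by blast
      have "dist E w a \<noteq> 0" using dzero a V by metis
      have sa: "dist E v a = dist E a v" "dist E u a = dist E a u" using dsym a V by metis+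
      have nm2: "\<not> hasmed a v u"
      proof
        assume "hasmed a v u"
        from shrink[OF V(3) V(2) V(1) a(1) a(3) a(4) this] have "hasmed w v u" .
        from swap12[OF V(3) V(2) V(1) this] have "hasmed v w u" .
        from swap23[OF V(2) V(3) V(1) this] have "hasmed v u w" .
        from swap12[OF V(2) V(1) V(3) this] show False using nm by blast
      qed
      have "dist E a v + dist E v u + dist E a u < dist E u v + dist E v w + dist E u w"
        using a s \<open>dist E w a \<noteq> 0\<close> by linarith
      then show ?thesis using less.hyps[OF _ a(1) V(2) V(1) nm2] by blast
    next
      assume "path_edges P \<inter> path_edges R \<noteq> {}"
      then obtain e where e: "e \<in> path_edges P" "e \<in> path_edges (rev R)" by (auto simp: pe_rev)
      obtain a where a: "a \<in> V" "a \<noteq> u" "dist E u a + dist E a v = dist E u v"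
        "dist E u a + dist E a w = dist E u w"
        using shared_edge[OF PQR(1) sp_rev[OF PQR(3) V(3,1)] V(1) e] by blast
      have "dist E u a \<noteq> 0" using dzero a V by metis
      have nm2: "\<not> hasmed a v w"
      proof
        assume "hasmed a v w"
        from shrink[OF V(1) V(2) V(3) a(1) a(3) a(4) this] show False using nm by blast
      qed
      have "dist E a v + dist E v w + dist E a w < dist E u v + dist E v w + dist E u w"
        using a \<open>dist E u a \<noteq> 0\<close> by linarith
      then show ?thesis using less.hyps[OF _ a(1) V(2) V(3) nm2] by blast
    qed
  qed
qed

end


context cg
begin

lemma bad_nomed:
  assumes V: "u \<in> V" "v \<in> V" "w \<in> V" and b: "bad u v w"
  shows "\<not> hasmed u v w"
proof
  assume "hasmed u v w"
  then obtain x where x: "x \<in> V" "dist E u x + dist E x v = dist E u v"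
      "dist E v x + dist E x w = dist E v w" "dist E u x + dist E x w = dist E u w"
    unfolding hasmed_def by blast
  have mx: "2 * max (dist E u v) (max (dist E u w) (dist E v w)) < dist E u v + dist E u w + dist E v w"
    and dj: "\<And>P Q R. shortest_path E P u v \<Longrightarrow> shortest_path E Q v w \<Longrightarrow> shortest_path E R w u \<Longrightarrow>
             path_edges P \<inter> path_edges Q = {}"
    using b unfolding bad_def by blast+
  have m1: "dist E u v \<le> max (dist E u v) (max (dist E u w) (dist E v w))"
    "dist E u w \<le> max (dist E u v) (max (dist E u w) (dist E v w))"
    "dist E v w \<le> max (dist E u v) (max (dist E u w) (dist E v w))" by auto
  have s: "dist E v u = dist E u v" "dist E w u = dist E u w" "dist E w v = dist E v w"
    "dist E x u = dist E u x" "dist E x v = dist E v x" "dist E x w = dist E w x"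
    using dsym V x(1) by metis+
  have xu: "x \<noteq> u"
  proof
    assume "x = u" then show False using x mx m1 s by simp
  qed
  have xv: "x \<noteq> v"
  proof
    assume "x = v" then show False using x mx m1 s by simp
  qed
  have xw: "x \<noteq> w"
  proof
    assume "x = w" then show False using x mx m1 s by simp
  qed
  obtain Bu where Bu: "shortest_path E Bu x u" using ex_sp x(1) V by blast
  obtain A where A: "shortest_path E A x v" using ex_sp x(1) V by blast
  obtain Bw where Bw: "shortest_path E Bw x w" using ex_sp x(1) V by blast
  obtain R where R: "shortest_path E R w u" using ex_sp V by blast
  have wBu: "walk E Bu x u" "length Bu = Suc (dist E x u)" using Bu unfolding shortest_path_def by auto
  have wA: "walk E A x v" "length A = Suc (dist E x v)" using A unfolding shortest_path_def by auto
  have wBw: "walk E Bw x w" "length Bw = Suc (dist E x w)" using Bw unfolding shortest_path_def by auto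
  define P where "P = rev Bu @ tl A"
  define Q where "Q = rev A @ tl Bw"
  have "walk E P u v" unfolding P_def using walk_append[OF walk_rev[OF wBu(1)] wA(1)] .
  moreover have "length P = Suc (dist E u v)" unfolding P_def using wBu(2) wA(2) x s by simp
  ultimately have sP: "shortest_path E P u v" unfolding shortest_path_def by blast
  have "walk E Q v w" unfolding Q_def using walk_append[OF walk_rev[OF wA(1)] wBw(1)] .
  moreover have "length Q = Suc (dist E v w)" unfolding Q_def using wBw(2) wA(2) x s by simp
  ultimately have sQ: "shortest_path E Q v w" unfolding shortest_path_def by blast
  have dis: "path_edges P \<inter> path_edges Q = {}" using dj[OF sP sQ R] .
  have ne: "rev Bu \<noteq> []" "A \<noteq> []" using wBu(1) wA(1) unfolding walk_def by auto
  have "last (rev Bu) = hd A" using wBu(1) wA(1) unfolding walk_def by (simp add: last_rev)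
  then have "P = butlast (rev Bu) @ A" unfolding P_def using app_tl ne by blast
  then have s1: "path_edges A \<subseteq> path_edges P" using pe_app_right by metis
  have s2: "path_edges A \<subseteq> path_edges Q" unfolding Q_def using pe_app_left[of "rev A"] pe_rev[of A] by blast
  have "dist E x v \<noteq> 0" using dzero x(1) V xv by metis
  then have "Suc 0 < length A" using wA(2) by simp
  then have "{A ! 0, A ! Suc 0} \<in> path_edges A" unfolding path_edges_def by blast
  then show False using s1 s2 dis by blast
qed

end

theorem theorem4:
  fixes V :: "'a set" and E :: "'a set set"
  assumes "simple_graph V E" and "connected_graph V E" and "card V \<ge> 3"
  shows "wiener3 V E \<ge> (real (card V) - 2) / 2 * wiener V E \<and>
    (wiener3 V E = (real (card V) - 2) / 2 * wiener V E \<longleftrightarrow>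
      \<not> (\<exists>u\<in>V. \<exists>v\<in>V. \<exists>w\<in>V. u \<noteq> v \<and> v \<noteq> w \<and> u \<noteq> w \<and>
          2 * max (dist E u v) (max (dist E u w) (dist E v w))
            < dist E u v + dist E u w + dist E v w \<and>
          (\<forall>P Q R. shortest_path E P u v \<longrightarrow> shortest_path E Q v w \<longrightarrow> shortest_path E R w u \<longrightarrow>
             path_edges P \<inter> path_edges Q = {} \<and> path_edges Q \<inter> path_edges R = {} \<and>
             path_edges P \<inter> path_edges R = {})))"
proof -
  interpret cg V E using assms(1,2) by unfold_locales
  define Ds where "Ds = (\<lambda>S. \<Sum>a\<in>S. \<Sum>b\<in>S. real (dist E a b))"
  define g where "g = (\<lambda>S. real (steiner_dist V E S) - Ds S / 4)"
  have trip: "Ds {u,v,w} / 4 \<le> real (steiner_dist V E {u,v,w}) \<and>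
      (real (steiner_dist V E {u,v,w}) = Ds {u,v,w} / 4 \<longleftrightarrow> hasmed u v w)"
    if "u \<in> V" "v \<in> V" "w \<in> V" "u \<noteq> v" "v \<noteq> w" "u \<noteq> w" for u v w
  proof -
    have "Ds {u,v,w} = 2 * real (dist E u v + dist E v w + dist E u w)"
      unfolding Ds_def using Ds_triple that by blast
    moreover have "dist E u v + dist E v w + dist E u w \<le> 2 * steiner_dist V E {u,v,w}"
      "2 * steiner_dist V E {u,v,w} = dist E u v + dist E v w + dist E u w \<longleftrightarrow> hasmed u v w"
      using triple that by blast+
    moreover have "(real (steiner_dist V E {u,v,w}) = real (dist E u v + dist E v w + dist E u w) / 2)
        \<longleftrightarrow> (2 * steiner_dist V E {u,v,w} = dist E u v + dist E v w + dist E u w)"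
    proof -
      have "(real (steiner_dist V E {u,v,w}) = real (dist E u v + dist E v w + dist E u w) / 2)
        \<longleftrightarrow> real (2 * steiner_dist V E {u,v,w}) = real (dist E u v + dist E v w + dist E u w)"
        by auto
      then show ?thesis by (simp only: of_nat_eq_iff)
    qed
    moreover have "real (dist E u v + dist E v w + dist E u w) \<le> real (2 * steiner_dist V E {u,v,w})"
      using calculation(2) by (simp only: of_nat_le_iff)
    ultimately show ?thesis by auto
  qed
  have gnn: "\<forall>S\<in>T3. 0 \<le> g S"
  proof
    fix S assume "S \<in> T3"
    then obtain u v w where S: "S = {u,v,w}" "u \<noteq> v" "v \<noteq> w" "u \<noteq> w" "S \<subseteq> V"
      unfolding T3_def by (auto simp: card_3_iff)
    then show "0 \<le> g S" unfolding g_def using trip[of u v w] by auto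
  qed
  have W3: "wiener3 V E = (\<Sum>S\<in>T3. real (steiner_dist V E S))"
    unfolding wiener3_def T3_def by simp
  have RHS: "(real (card V) - 2) / 2 * wiener V E = (\<Sum>S\<in>T3. Ds S / 4)"
    using sum_identity unfolding wiener_def Ds_def by (simp add: sum_divide_distrib[symmetric])
  have diff: "wiener3 V E - (real (card V) - 2) / 2 * wiener V E = (\<Sum>S\<in>T3. g S)"
    unfolding W3 RHS g_def by (simp add: sum_subtractf)
  have ineq: "wiener3 V E \<ge> (real (card V) - 2) / 2 * wiener V E"
  proof -
    have "0 \<le> sum g T3" using gnn by (intro sum_nonneg) blast
    then show ?thesis using diff by linarith
  qed
  have "wiener3 V E = (real (card V) - 2) / 2 * wiener V E \<longleftrightarrow> (\<forall>S\<in>T3. g S = 0)"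
    using diff sum_nonneg_eq_0_iff[OF finT3, of g] gnn by auto
  also have "\<dots> \<longleftrightarrow> (\<forall>u\<in>V. \<forall>v\<in>V. \<forall>w\<in>V. u \<noteq> v \<longrightarrow> v \<noteq> w \<longrightarrow> u \<noteq> w \<longrightarrow> hasmed u v w)"
  proof
    assume h: "\<forall>S\<in>T3. g S = 0"
    show "\<forall>u\<in>V. \<forall>v\<in>V. \<forall>w\<in>V. u \<noteq> v \<longrightarrow> v \<noteq> w \<longrightarrow> u \<noteq> w \<longrightarrow> hasmed u v w"
    proof (intro ballI impI)
      fix u v w assume V: "u \<in> V" "v \<in> V" "w \<in> V" "u \<noteq> v" "v \<noteq> w" "u \<noteq> w"
      have "{u,v,w} \<in> T3" unfolding T3_def using V by auto
      then have "g {u,v,w} = 0" using h by blast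
      then show "hasmed u v w" using trip[OF V] unfolding g_def by auto
    qed
  next
    assume h: "\<forall>u\<in>V. \<forall>v\<in>V. \<forall>w\<in>V. u \<noteq> v \<longrightarrow> v \<noteq> w \<longrightarrow> u \<noteq> w \<longrightarrow> hasmed u v w"
    show "\<forall>S\<in>T3. g S = 0"
    proof
      fix S assume "S \<in> T3"
      then obtain u v w where S: "S = {u,v,w}" "u \<noteq> v" "v \<noteq> w" "u \<noteq> w" "S \<subseteq> V"
        unfolding T3_def by (auto simp: card_3_iff)
      then have V: "u \<in> V" "v \<in> V" "w \<in> V" by auto
      then have "hasmed u v w" using h S by blast
      then show "g S = 0" using trip[OF V S(2-4)] S(1) unfolding g_def by auto
    qed
  qed
  also have "\<dots> \<longleftrightarrow> \<not> (\<exists>u\<in>V. \<exists>v\<in>V. \<exists>w\<in>V. bad u v w)"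
  proof
    assume h: "\<forall>u\<in>V. \<forall>v\<in>V. \<forall>w\<in>V. u \<noteq> v \<longrightarrow> v \<noteq> w \<longrightarrow> u \<noteq> w \<longrightarrow> hasmed u v w"
    show "\<not> (\<exists>u\<in>V. \<exists>v\<in>V. \<exists>w\<in>V. bad u v w)"
    proof
      assume "\<exists>u\<in>V. \<exists>v\<in>V. \<exists>w\<in>V. bad u v w"
      then obtain u v w where V: "u \<in> V" "v \<in> V" "w \<in> V" and b: "bad u v w" by blast
      then have "u \<noteq> v" "v \<noteq> w" "u \<noteq> w" unfolding bad_def by auto
      then have "hasmed u v w" using h V by blast
      then show False using bad_nomed[OF V b] by blast
    qed
  next
    assume h: "\<not> (\<exists>u\<in>V. \<exists>v\<in>V. \<exists>w\<in>V. bad u v w)"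
    show "\<forall>u\<in>V. \<forall>v\<in>V. \<forall>w\<in>V. u \<noteq> v \<longrightarrow> v \<noteq> w \<longrightarrow> u \<noteq> w \<longrightarrow> hasmed u v w"
      using nomed_bad h by blast
  qed
  finally show ?thesis using ineq unfolding bad_def by blast
qed


end
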